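(* Let $m\geq 1$ and $n\geq 3$. For every $k\in\{1,\ldots,m\}$, there exists exactly one walk in $D^m_n$ of length $2n-2$ from vertex $(k-1)(n-1)+2$ to vertex $(k-1)(n-1)+n$.
   Context: For integers $m\geq 1$, $n\geq 3$, the oriented Dutch windmill graph $D^m_n$ is the directed graph with vertex set $V=\{1,2,\ldots,m(n-1)+1\}$ whose directed edges $(a,b)$ are exactly: $(1,(k-1)(n-1)+2)$ for $k\in\{1,\ldots,m\}$; $((k-1)(n-1)+i,(k-1)(n-1)+i+1)$ for $k\in\{1,\ldots,m\}$ and $i\in\{2,\ldots,n-1\}$; and $((k-1)(n-1)+n,1)$ for $k\in\{1,\ldots,m\}$. A walk is a sequence of vertices $\langle v_1,\ldots,v_r\rangle$ in which each $(v_t,v_{t+1})$ is an edge; its length is $r-1$. *)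

theory Defs
  imports Main
begin

definition dw_vertices :: "nat \<Rightarrow> nat \<Rightarrow> nat set" where
  "dw_vertices m n = {1 .. m * (n - 1) + 1}"

definition dw_edge :: "nat \<Rightarrow> nat \<Rightarrow> nat \<Rightarrow> nat \<Rightarrow> bool" where
  "dw_edge m n a b \<longleftrightarrow>
     (\<exists>k\<in>{1..m}. a = 1 \<and> b = (k - 1) * (n - 1) + 2)
   \<or> (\<exists>k\<in>{1..m}. \<exists>i\<in>{2..n - 1}. a = (k - 1) * (n - 1) + i \<and> b = (k - 1) * (n - 1) + i + 1)
   \<or> (\<exists>k\<in>{1..m}. a = (k - 1) * (n - 1) + n \<and> b = 1)"

text \<open>A walk is a nonempty vertex sequence with consecutive vertices joined by edges;
  its length is the number of edges, i.e. length of the list minus one.\<close>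
definition dw_walk :: "nat \<Rightarrow> nat \<Rightarrow> nat list \<Rightarrow> bool" where
  "dw_walk m n vs \<longleftrightarrow> vs \<noteq> [] \<and> set vs \<subseteq> dw_vertices m n \<and>
     (\<forall>t. Suc t < length vs \<longrightarrow> dw_edge m n (vs ! t) (vs ! Suc t))"

end

theory Submission
  imports Defs
begin

lemma modq: "r < (d::nat) \<Longrightarrow> (q*d+r) mod d = r \<and> (q*d+r) div d = q"
  by simp

lemma blade_inj:
  fixes n i i' q q' :: nat
  assumes "n \<ge> 3" "2 \<le> i" "i \<le> n" "2 \<le> i'" "i' \<le> n"
    "q*(n-1)+i = q'*(n-1)+i'"
  shows "q = q' \<and> i = i'"
proof -
  have e: "q*(n-1)+(i-2) = q'*(n-1)+(i'-2)" using assms by simp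
  have "i-2 < n-1" "i'-2 < n-1" using assms by auto
  from modq[OF this(1), of q] modq[OF this(2), of q'] e
  have "q = q'" "i-2 = i'-2" by metis+
  then show ?thesis using assms by simp
qed

lemma edge_from_blade:
  assumes n: "n \<ge> 3" and "2 \<le> i" "i \<le> n-1"
    and e: "dw_edge m n ((k-1)*(n-1)+i) b"
  shows "b = (k-1)*(n-1)+i+1"
  using e unfolding dw_edge_def
proof (elim disjE bexE conjE)
  fix k' assume "(k-1)*(n-1)+i = 1" thus ?thesis using assms by simp
next
  fix k' i' assume "i' \<in> {2..n-1}" "(k-1)*(n-1)+i = (k'-1)*(n-1)+i'"
    "b = (k'-1)*(n-1)+i'+1"
  moreover have "k-1 = k'-1 \<and> i = i'" using blade_inj[of n i i' "k-1" "k'-1"] assms(1-3) calculation by auto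
  ultimately show ?thesis by simp
next
  fix k' assume "(k-1)*(n-1)+i = (k'-1)*(n-1)+n"
  then have "i = n" using blade_inj[of n i n "k-1" "k'-1"] assms(1-3) by auto
  thus ?thesis using assms(1-3) by simp
qed

lemma edge_from_end:
  assumes n: "n \<ge> 3"
    and e: "dw_edge m n ((k-1)*(n-1)+n) b"
  shows "b = 1"
  using e unfolding dw_edge_def
proof (elim disjE bexE conjE)
  fix k' assume "(k-1)*(n-1)+n = 1" thus ?thesis using assms by simp
next
  fix k' i' assume "i' \<in> {2..n-1}" "(k-1)*(n-1)+n = (k'-1)*(n-1)+i'"
  moreover have "i' \<le> n" "2 \<le> i'" using \<open>i' \<in> {2..n-1}\<close> by auto
  ultimately have "i' = n" using blade_inj[of n n i' "k-1" "k'-1"] assms(1) by auto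
  thus ?thesis using assms(1) \<open>i' \<in> {2..n-1}\<close> by simp
qed

lemma edge_from_one:
  assumes n: "n \<ge> 3"
    and e: "dw_edge m n 1 b"
  shows "\<exists>k'\<in>{1..m}. b = (k'-1)*(n-1)+2"
  using e assms unfolding dw_edge_def by auto

lemma vert_bound:
  fixes k m n :: nat
  assumes "1 \<le> k" "k \<le> m" "n \<ge> 3"
  shows "(k-1)*(n-1)+n \<le> m*(n-1)+1"
proof -
  have "(k-1)*(n-1)+(n-1) = k*(n-1)" using assms
    by (metis Suc_diff_1 add.commute less_le_trans mult_Suc zero_less_one)
  also have "\<dots> \<le> m*(n-1)" using assms by simp
  finally show ?thesis using assms by simp
qed

theorem lemma2p11:
  fixes m n k :: nat
  assumes "m \<ge> 1" and "n \<ge> 3" and "k \<in> {1..m}"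
  shows "\<exists>!vs. dw_walk m n vs \<and> length vs = (2 * n - 2) + 1
              \<and> hd vs = (k - 1) * (n - 1) + 2 \<and> last vs = (k - 1) * (n - 1) + n"
proof -
  define B where "B = (k-1)*(n-1)"
  define f where "f j = (if j < n-1 then B+2+j else if j = n-1 then 1 else B+2+(j-n))" for j
  define W where "W = map f [0..<2*n-1]"
  have k: "1 \<le> k" "k \<le> m" using assms by auto
  have vb: "B+n \<le> m*(n-1)+1" using vert_bound[OF k assms(2)] B_def by simp
  have lenW: "length W = 2*n-2+1" using assms W_def by simp
  have W_nth: "W ! j = f j" if "j < 2*n-1" for j using that W_def by simp
  have Wne: "W \<noteq> []" using lenW by auto
  have PW: "dw_walk m n W \<and> length W = (2 * n - 2) + 1
              \<and> hd W = (k - 1) * (n - 1) + 2 \<and> last W = (k - 1) * (n - 1) + n"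
  proof (intro conjI)
    show "length W = 2*n-2+1" by (rule lenW)
    show "hd W = (k - 1) * (n - 1) + 2"
      using assms W_nth[of 0] lenW B_def f_def hd_conv_nth[OF Wne] by auto
    show "last W = (k - 1) * (n - 1) + n"
      proof -
      have "last W = f (2*n-2)" using W_nth[of "2*n-2"] lenW last_conv_nth[OF Wne] assms by simp
      also have "\<dots> = B + 2 + (2*n-2-n)"
      proof -
        have "\<not> (2*n-2 < n-1)" "2*n-2 \<noteq> n-1" using assms by arith+
        then show ?thesis unfolding f_def by presburger
      qed
      also have "\<dots> = B + n" using assms by simp
      finally show ?thesis using B_def by simp
    qed
    show "dw_walk m n W"
      unfolding dw_walk_def
    proof (intro conjI allI impI)
      show "W \<noteq> []" using lenW by auto
      show "set W \<subseteq> dw_vertices m n"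
        using vb assms unfolding W_def dw_vertices_def f_def by auto
      fix t assume t: "Suc t < length W"
      have ts: "t < 2*n-2" using t lenW by simp
      show "dw_edge m n (W ! t) (W ! Suc t)"
      proof -
        consider "t < n-2" | "t = n-2" | "t = n-1" | "n \<le> t" by linarith
        then show ?thesis
        proof cases
          case 1
          then have w: "W!t = B+(t+2)" "W!Suc t = B+(t+2)+1"
            using W_nth ts f_def by auto
          then show ?thesis
          proof -
            have "\<exists>kk\<in>{1..m}. \<exists>i\<in>{2..n-1}. W!t = (kk-1)*(n-1)+i \<and> W!Suc t = (kk-1)*(n-1)+i+1"
            proof -
              have "k \<in> {1..m}" "t+2 \<in> {2..n-1}" using k ts 1 by auto
              moreover have "W!t = (k-1)*(n-1)+(t+2) \<and> W!Suc t = (k-1)*(n-1)+(t+2)+1"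
                using w B_def by simp
              ultimately show ?thesis by blast
            qed
            then show ?thesis unfolding dw_edge_def by blast
          qed
        next
          case 2
          then have "W!t = B+n" "W!Suc t = 1"
            using W_nth ts f_def assms by auto
          then show ?thesis unfolding dw_edge_def using k B_def by auto
        next
          case 3
          then have "W!t = 1" "W!Suc t = B+2"
            using W_nth ts f_def assms by auto
          then show ?thesis unfolding dw_edge_def using k B_def by auto
        next
          case 4
          then have w: "W!t = B+(t-n+2)" "W!Suc t = B+(t-n+2)+1"
            using W_nth ts f_def by auto
          then show ?thesis
          proof -
            have "\<exists>kk\<in>{1..m}. \<exists>i\<in>{2..n-1}. W!t = (kk-1)*(n-1)+i \<and> W!Suc t = (kk-1)*(n-1)+i+1"
            proof -
              have "k \<in> {1..m}" "t-n+2 \<in> {2..n-1}" using k ts 4 by auto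
              moreover have "W!t = (k-1)*(n-1)+(t-n+2) \<and> W!Suc t = (k-1)*(n-1)+(t-n+2)+1"
                using w B_def by simp
              ultimately show ?thesis by blast
            qed
            then show ?thesis unfolding dw_edge_def by blast
          qed
        qed
      qed
    qed
  qed
  show ?thesis
  proof (rule ex1I[of _ W])
    show "dw_walk m n W \<and> length W = (2 * n - 2) + 1
              \<and> hd W = (k - 1) * (n - 1) + 2 \<and> last W = (k - 1) * (n - 1) + n" by (rule PW)
    fix vs assume P: "dw_walk m n vs \<and> length vs = (2 * n - 2) + 1
              \<and> hd vs = (k - 1) * (n - 1) + 2 \<and> last vs = (k - 1) * (n - 1) + n"
    have len: "length vs = 2*n-1" using P assms by simp
    have edge: "dw_edge m n (vs ! t) (vs ! Suc t)" if "Suc t < 2*n-1" for t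
      using P len that unfolding dw_walk_def by auto
    have vne: "vs \<noteq> []" using len assms by auto
    have hd0: "vs ! 0 = B+2" using P B_def hd_conv_nth[OF vne] by simp
    have "length vs - 1 = 2*n-2" using len by simp
    then have "last vs = vs ! (2*n-2)" using last_conv_nth[OF vne] by metis
    then have lst: "vs ! (2*n-2) = B+n" using P B_def by simp
    have A: "vs ! j = B+2+j" if "j \<le> n-2" for j
      using that
    proof (induction j)
      case 0 then show ?case using hd0 by simp
    next
      case (Suc j)
      have "vs ! Suc j = B+(j+2)+1"
        using edge_from_blade[of n "j+2" m k "vs ! Suc j"] edge[of j] Suc assms B_def
        by auto
      then show ?case by simp
    qed
    have one: "vs ! (n-1) = 1"
      using edge_from_end[of n m k "vs ! (n-1)"] edge[of "n-2"] A[of "n-2"] assms B_def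
      by (simp add: Suc_diff_Suc numeral_eq_Suc)
    obtain k' where k': "k' \<in> {1..m}" "vs ! n = (k'-1)*(n-1)+2"
      using edge_from_one[of n m "vs ! n"] edge[of "n-1"] one assms by auto
    define B' where "B' = (k'-1)*(n-1)"
    have C: "vs ! (n+j) = B'+2+j" if "j \<le> n-2" for j
      using that
    proof (induction j)
      case 0 then show ?case using k' B'_def by simp
    next
      case (Suc j)
      have "vs ! Suc (n+j) = B'+(j+2)+1"
        using edge_from_blade[of n "j+2" m k' "vs ! Suc (n+j)"] edge[of "n+j"] Suc assms B'_def
        by auto
      then show ?case by simp
    qed
    have "vs ! (2*n-2) = B'+n" using C[of "n-2"] assms
      by (simp add: mult_2)
    then have BB: "B' = B" using lst by simp
    show "vs = W"
    proof (rule nth_equalityI)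
      show "length vs = length W" using len lenW assms by simp
      fix j assume j: "j < length vs"
      consider "j < n-1" | "j = n-1" | "n \<le> j" by linarith
      then show "vs ! j = W ! j"
      proof cases
        case 1 then show ?thesis using A[of j] W_nth[of j] f_def len j by auto
      next
        case 2 then show ?thesis using one W_nth[of j] f_def len j by auto
      next
        case 3 then show ?thesis using C[of "j-n"] W_nth[of j] f_def len j BB by auto
      qed
    qed
  qed
qed

end
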